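(* The unary unbiased black-box complexity of the $\mathrm{DLB}$ problem is $O(n^2)$.
   Context: Let $n$ be an even positive integer. For $x\in\{0,1\}^n$ consider the blocks $(x_{2\ell+1},x_{2\ell+2})$, $\ell=0,\dots,\frac n2-1$. If $x\neq(1,\dots,1)$, let $m$ be the smallest $\ell$ with $x_{2\ell+1}\neq 1$ or $x_{2\ell+2}\neq 1$, and define $\mathrm{DLB}(x)=2m+1$ if $x_{2m+1}+x_{2m+2}=0$ and $\mathrm{DLB}(x)=2m$ if $x_{2m+1}+x_{2m+2}=1$; set $\mathrm{DLB}(1,\dots,1)=n$. The $\mathrm{DLB}$ problem is to maximize $\mathrm{DLB}$. A unary unbiased variation operator $V$ assigns to each $x\in\{0,1\}^n$ a probability distribution $V(x)$ on $\{0,1\}^n$ such that for all $x,y,z$, $\Pr[y=V(x)]=\Pr[y\oplus z=V(x\oplus z)]$, and for all permutations $\sigma$ of $[1..n]$, $\Pr[y=V(x)]=\Pr[\sigma(y)=V(\sigma(x))]$, where $\sigma(x)=(x_{\sigma(1)},\dots,x_{\sigma(n)})$. A unary unbiased black-box algorithm generates $x^{(0)}$ uniformly at random; for $t=1,2,\dots$, based solely on $(f(x^{(0)}),\dots,f(x^{(t-1)}))$, it chooses a unary unbiased variation operator $V$ and an index $i\in[0..t-1]$ and samples $x^{(t)}\sim V(x^{(i)})$; each search point is evaluated when generated. The runtime is the number of fitness evaluations until (and including) the first evaluation of an optimum. The unary unbiased black-box complexity of $\mathrm{DLB}$ is the infimum over all such algorithms of the expected runtime on $\mathrm{DLB}$.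 *)

theory Defs
  imports "HOL-Probability.Probability_Mass_Function" "HOL-Combinatorics.Permutations"
begin

text \<open>Bit strings of length n are boolean lists (True = 1); position i (0-based) is bit i+1.\<close>

definition bitstrings :: "nat \<Rightarrow> bool list set" where
  "bitstrings n = {xs. length xs = n}"

definition xor_bits :: "bool list \<Rightarrow> bool list \<Rightarrow> bool list" where
  "xor_bits x z = map2 (\<noteq>) x z"

definition perm_bits :: "nat \<Rightarrow> (nat \<Rightarrow> nat) \<Rightarrow> bool list \<Rightarrow> bool list" where
  "perm_bits n \<sigma> x = map (\<lambda>i. x ! \<sigma> i) [0..<n]"

definition dlb :: "nat \<Rightarrow> bool list \<Rightarrow> nat" where
  "dlb n x = (if x = replicate n True then n
     else (let m = (LEAST l. l < n div 2 \<and> \<not> (x ! (2*l) \<and> x ! (2*l+1)))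
           in if \<not> x ! (2*m) \<and> \<not> x ! (2*m+1) then 2*m+1 else 2*m))"

definition unary_unbiased :: "nat \<Rightarrow> (bool list \<Rightarrow> bool list pmf) \<Rightarrow> bool" where
  "unary_unbiased n V \<longleftrightarrow>
     (\<forall>x\<in>bitstrings n. set_pmf (V x) \<subseteq> bitstrings n) \<and>
     (\<forall>x\<in>bitstrings n. \<forall>y\<in>bitstrings n. \<forall>z\<in>bitstrings n.
        pmf (V x) y = pmf (V (xor_bits x z)) (xor_bits y z)) \<and>
     (\<forall>\<sigma>. \<sigma> permutes {0..<n} \<longrightarrow> (\<forall>x\<in>bitstrings n. \<forall>y\<in>bitstrings n.
        pmf (V x) y = pmf (V (perm_bits n \<sigma> x)) (perm_bits n \<sigma> y)))"

text \<open>A unary unbiased black-box algorithm: given the fitness history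
  (f(x0), ..., f(x(t-1))), it (randomly) chooses an operator and an index i < t.\<close>
type_synonym algorithm = "nat list \<Rightarrow> ((bool list \<Rightarrow> bool list pmf) \<times> nat) pmf"

definition valid_algorithm :: "nat \<Rightarrow> algorithm \<Rightarrow> bool" where
  "valid_algorithm n A \<longleftrightarrow>
     (\<forall>h. h \<noteq> [] \<longrightarrow> (\<forall>(V, i) \<in> set_pmf (A h). unary_unbiased n V \<and> i < length h))"

text \<open>Distribution of the first k+1 search points (x0, ..., xk).\<close>
primrec run :: "nat \<Rightarrow> (bool list \<Rightarrow> nat) \<Rightarrow> algorithm \<Rightarrow> nat \<Rightarrow> bool list list pmf" where
  "run n f A 0 = map_pmf (\<lambda>x. [x]) (pmf_of_set (bitstrings n))"
| "run n f A (Suc k) = bind_pmf (run n f A k) (\<lambda>xs.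
      bind_pmf (A (map f xs)) (\<lambda>(V, i). map_pmf (\<lambda>y. xs @ [y]) (V (xs ! i))))"

definition is_optimum :: "nat \<Rightarrow> (bool list \<Rightarrow> nat) \<Rightarrow> bool list \<Rightarrow> bool" where
  "is_optimum n f x \<longleftrightarrow> x \<in> bitstrings n \<and> (\<forall>y\<in>bitstrings n. f y \<le> f x)"

text \<open>Expected runtime E[T] = sum over t \<ge> 0 of Pr[T > t], where T > t iff none of
  x0..xt is an optimum (tail-sum formula; equals infinity if T = infinity with positive probability).\<close>
definition expected_runtime :: "nat \<Rightarrow> (bool list \<Rightarrow> nat) \<Rightarrow> algorithm \<Rightarrow> ennreal" where
  "expected_runtime n f A =
     (\<Sum>t. ennreal (measure_pmf.prob (run n f A t) {xs. \<forall>x\<in>set xs. \<not> is_optimum n f x}))"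

definition unary_unbiased_bbc :: "nat \<Rightarrow> (bool list \<Rightarrow> nat) \<Rightarrow> ennreal" where
  "unary_unbiased_bbc n f = (INF A \<in> {A. valid_algorithm n A}. expected_runtime n f A)"

end

theory Submission
  imports Defs
begin

definition flip :: "nat \<Rightarrow> bool list \<Rightarrow> bool list" where
  "flip p x = x[p := \<not> x ! p]"

lemma length_flip[simp]: "length (flip p x) = length x"
  by (simp add: flip_def)

lemma nth_flip: "i < length x \<Longrightarrow> flip p x ! i = (if i = p then \<not> x ! i else x ! i)"
  by (simp add: flip_def nth_list_update)

lemma dlb_block:
  assumes len: "length x = n" and ev: "even n" and l: "l < n div 2"
    and pre: "\<forall>k<l. x!(2*k) \<and> x!(2*k+1)" and nb: "\<not> (x!(2*l) \<and> x!(2*l+1))"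
  shows "dlb n x = (if \<not> x!(2*l) \<and> \<not> x!(2*l+1) then 2*l+1 else 2*l)"
proof -
  have lt: "2*l+1 < n" using l ev by auto
  have ne: "x \<noteq> replicate n True"
  proof
    assume "x = replicate n True"
    then show False using nb lt by auto
  qed
  have le: "(LEAST k. k < n div 2 \<and> \<not> (x ! (2*k) \<and> x ! (2*k+1))) = l"
  proof (rule Least_equality)
    show "l < n div 2 \<and> \<not> (x ! (2 * l) \<and> x ! (2 * l + 1))" using l nb by auto
  next
    fix y assume "y < n div 2 \<and> \<not> (x ! (2 * y) \<and> x ! (2 * y + 1))"
    then show "l \<le> y" using pre by (meson not_le)
  qed
  show ?thesis unfolding dlb_def using ne le by (simp add: Let_def)
qed

lemma dlb_ones: "dlb n (replicate n True) = n"
  by (simp add: dlb_def)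

lemma dlb_cases:
  assumes len: "length x = n" and ev: "even n"
  shows "x = replicate n True \<or> (\<exists>l<n div 2. (\<forall>k<l. x!(2*k) \<and> x!(2*k+1)) \<and> \<not> (x!(2*l) \<and> x!(2*l+1)))"
proof (cases "\<exists>l. l < n div 2 \<and> \<not> (x!(2*l) \<and> x!(2*l+1))")
  case True
  then obtain l where "l < n div 2 \<and> \<not> (x!(2*l) \<and> x!(2*l+1))"
    and min: "\<forall>k<l. \<not> (k < n div 2 \<and> \<not> (x!(2*k) \<and> x!(2*k+1)))"
    using exists_least_iff[of "\<lambda>l. l < n div 2 \<and> \<not> (x!(2*l) \<and> x!(2*l+1))"] by blast
  then show ?thesis by (metis order.strict_trans)
next
  case False
  have "\<forall>i<n. x ! i"
  proof (intro allI impI)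
    fix i assume i: "i < n"
    have "i div 2 < n div 2" using i ev by (auto elim!: evenE)
    then have "x!(2*(i div 2)) \<and> x!(2*(i div 2)+1)" using False by blast
    moreover have "i = 2*(i div 2) \<or> i = 2*(i div 2)+1" by presburger
    ultimately show "x ! i" by metis
  qed
  then have "x = replicate n True" using len by (simp add: list_eq_iff_nth_eq)
  then show ?thesis by simp
qed

lemma dlb_le:
  assumes len: "length x = n" and ev: "even n"
  shows "dlb n x \<le> n" and "x \<noteq> replicate n True \<Longrightarrow> dlb n x < n"
proof -
  have "x \<noteq> replicate n True \<Longrightarrow> dlb n x < n"
  proof -
    assume ne: "x \<noteq> replicate n True"
    then obtain l where l: "l<n div 2" "\<forall>k<l. x!(2*k) \<and> x!(2*k+1)" "\<not> (x!(2*l) \<and> x!(2*l+1))"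
      using dlb_cases[OF len ev] by blast
    have "2*l+1 < n" using l ev by auto
    then show "dlb n x < n" using dlb_block[OF len ev l] by auto
  qed
  then show "x \<noteq> replicate n True \<Longrightarrow> dlb n x < n" by blast
  show "dlb n x \<le> n" using \<open>x \<noteq> replicate n True \<Longrightarrow> dlb n x < n\<close> dlb_ones[of n]
    by (cases "x = replicate n True") auto
qed

definition key :: "nat \<Rightarrow> bool list \<Rightarrow> nat" where
  "key n x = dlb n x div 2"

definition pot :: "nat \<Rightarrow> bool list \<Rightarrow> nat" where
  "pot n x = 3*n*(n div 2 - key n x) + (if odd (dlb n x) then n else 0)"

lemma pot_le: "pot n x \<le> 3*n*(n div 2) + n"
  unfolding pot_def by (auto intro!: add_mono mult_le_mono trans_le_add1)

lemma key_block:
  assumes len: "length x = n" and ev: "even n" and l: "l < n div 2"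
    and pre: "\<forall>k<l. x!(2*k) \<and> x!(2*k+1)" and nb: "\<not> (x!(2*l) \<and> x!(2*l+1))"
  shows "key n x = l"
  using dlb_block[OF assms] by (simp add: key_def)

lemma pot_block11:
  assumes len: "length y = n" and ev: "even n" and l: "l < n div 2"
    and pre: "\<forall>k\<le>l. y!(2*k) \<and> y!(2*k+1)"
  shows "l < key n y \<and> pot n y \<le> 3*n*(n div 2 - l - 1) + n"
proof (cases "y = replicate n True")
  case True
  then show ?thesis using l ev by (simp add: key_def pot_def dlb_ones)
next
  case False
  then obtain l' where l': "l'<n div 2" "\<forall>k<l'. y!(2*k) \<and> y!(2*k+1)" "\<not> (y!(2*l') \<and> y!(2*l'+1))"
    using dlb_cases[OF len ev] by blast
  have "l < l'" using pre l'(3) by (meson not_le)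
  have k: "key n y = l'" using key_block[OF len ev l'] .
  have "pot n y \<le> 3*n*(n div 2 - l') + n" unfolding pot_def k by auto
  also have "\<dots> \<le> 3*n*(n div 2 - l - 1) + n" using \<open>l < l'\<close> by (intro add_mono mult_le_mono) auto
  finally show ?thesis using k \<open>l < l'\<close> by simp
qed


lemma drift_local:
  assumes len: "length x = n" and ev: "even n" and ne: "x \<noteq> replicate n True"
  shows "(\<Sum>p<n. (if key n x \<le> key n (flip p x) then pot n (flip p x) else pot n x)) + n
           \<le> n * pot n x"
proof -
  define \<phi> where "\<phi> p = (if key n x \<le> key n (flip p x) then pot n (flip p x) else pot n x)" for p
  obtain l where l: "l<n div 2" and pre: "\<forall>k<l. x!(2*k) \<and> x!(2*k+1)" and nb: "\<not> (x!(2*l) \<and> x!(2*l+1))"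
    using dlb_cases[OF len ev] ne by blast
  have lt: "2*l+1 < n" using l ev by auto
  have kx: "key n x = l" using key_block[OF len ev l pre nb] .
  have dx: "dlb n x = (if \<not> x!(2*l) \<and> \<not> x!(2*l+1) then 2*l+1 else 2*l)"
    using dlb_block[OF len ev l pre nb] .
  have potx: "pot n x = 3*n*(n div 2 - l) + (if \<not> x!(2*l) \<and> \<not> x!(2*l+1) then n else 0)"
    unfolding pot_def kx dx by auto
  have lenf: "length (flip p x) = n" for p using len by simp
  have rest: "\<phi> p = pot n x" if p: "p \<in> {..<n} - {2*l, 2*l+1}" for p
  proof (cases "p < 2*l")
    case True
    have xp: "x ! p" 
    proof -
      have "p div 2 < l" using True by auto
      then have "x!(2*(p div 2)) \<and> x!(2*(p div 2)+1)" using pre by blast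
      moreover have "p = 2*(p div 2) \<or> p = 2*(p div 2)+1" by presburger
      ultimately show ?thesis by metis
    qed
    have fp: "\<not> flip p x ! p" using xp p len by (simp add: nth_flip)
    have "flip p x \<noteq> replicate n True" using fp p by auto
    then obtain l' where l': "l'<n div 2" "\<forall>k<l'. flip p x!(2*k) \<and> flip p x!(2*k+1)"
      "\<not> (flip p x!(2*l') \<and> flip p x!(2*l'+1))"
      using dlb_cases[OF lenf ev] by blast
    have "l' \<le> p div 2"
    proof (rule ccontr)
      assume "\<not> l' \<le> p div 2"
      then have "flip p x!(2*(p div 2)) \<and> flip p x!(2*(p div 2)+1)" using l'(2) by auto
      moreover have "p = 2*(p div 2) \<or> p = 2*(p div 2)+1" by presburger
      ultimately show False using fp by metis
    qed
    then have "key n (flip p x) < key n x" using key_block[OF lenf ev l'] kx True by auto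
    then show ?thesis unfolding \<phi>_def by simp
  next
    case False
    then have p2: "2*l+1 < p" "p < n" using p by auto
    have pre': "\<forall>k<l. flip p x!(2*k) \<and> flip p x!(2*k+1)"
      using pre p2 lt len by (auto simp: nth_flip)
    have eq: "flip p x!(2*l) = x!(2*l)" "flip p x!(2*l+1) = x!(2*l+1)"
      using p2 lt len by (auto simp: nth_flip)
    have "dlb n (flip p x) = dlb n x"
      using dlb_block[OF lenf ev l pre'] eq nb dx by simp
    then show ?thesis unfolding \<phi>_def pot_def key_def by simp
  qed
  have spec: "\<phi> (2*l) + \<phi> (2*l+1) + n \<le> 2 * pot n x"
  proof -
    have pre2: "\<forall>k<l. flip q x!(2*k) \<and> flip q x!(2*k+1)" if "q \<ge> 2*l" for q
      using pre that lt len by (auto simp: nth_flip)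
    have a: "flip (2*l) x ! (2*l) = (\<not> x!(2*l))" "flip (2*l) x ! (2*l+1) = x!(2*l+1)"
      "flip (2*l+1) x ! (2*l) = x!(2*l)" "flip (2*l+1) x ! (2*l+1) = (\<not> x!(2*l+1))"
      using lt len by (auto simp: nth_flip)
    consider "\<not> x!(2*l)" "\<not> x!(2*l+1)" | "x!(2*l)" "\<not> x!(2*l+1)" | "\<not> x!(2*l)" "x!(2*l+1)"
      using nb by blast
    then show ?thesis
    proof cases
      case 1
      have d1: "dlb n (flip (2*l) x) = 2*l" using dlb_block[OF lenf ev l pre2] a 1 by simp
      have d2: "dlb n (flip (2*l+1) x) = 2*l" using dlb_block[OF lenf ev l pre2] a 1 by simp
      have "\<phi> (2*l) = 3*n*(n div 2 - l)" "\<phi> (2*l+1) = 3*n*(n div 2 - l)"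
        unfolding \<phi>_def pot_def key_def d1 d2 kx[unfolded key_def] by auto
      then show ?thesis using potx 1 by simp
    next
      case 2
      have d1: "dlb n (flip (2*l) x) = 2*l+1" using dlb_block[OF lenf ev l pre2] a 2 by simp
      have "\<phi> (2*l) = 3*n*(n div 2 - l) + n"
        unfolding \<phi>_def pot_def key_def d1 kx[unfolded key_def] by auto
      moreover have "\<forall>k\<le>l. flip (2*l+1) x!(2*k) \<and> flip (2*l+1) x!(2*k+1)"
      proof (intro allI impI)
        fix k assume "k \<le> l"
        then consider "k < l" | "k = l" by linarith
        then show "flip (2*l+1) x!(2*k) \<and> flip (2*l+1) x!(2*k+1)"
          using pre2[of "2*l+1"] a 2 by cases auto
      qed
      then have "l < key n (flip (2*l+1) x) \<and> pot n (flip (2*l+1) x) \<le> 3*n*(n div 2 - l - 1) + n"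
        using pot_block11[OF lenf ev l] by blast
      then have "\<phi> (2*l+1) \<le> 3*n*(n div 2 - l - 1) + n" unfolding \<phi>_def kx by auto
      moreover have "3*n*(n div 2 - l - 1) + 3*n = 3*n*(n div 2 - l)"
      proof -
        have "n div 2 - l - 1 + 1 = n div 2 - l" using l by simp
        then show ?thesis by (metis distrib_left mult_1_right)
      qed
      ultimately show ?thesis using potx 2 by simp
    next
      case 3
      have d1: "dlb n (flip (2*l+1) x) = 2*l+1" using dlb_block[OF lenf ev l pre2] a 3 by simp
      have "\<phi> (2*l+1) = 3*n*(n div 2 - l) + n"
        unfolding \<phi>_def pot_def key_def d1 kx[unfolded key_def] by auto
      moreover have "\<forall>k\<le>l. flip (2*l) x!(2*k) \<and> flip (2*l) x!(2*k+1)"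
      proof (intro allI impI)
        fix k assume "k \<le> l"
        then consider "k < l" | "k = l" by linarith
        then show "flip (2*l) x!(2*k) \<and> flip (2*l) x!(2*k+1)"
          using pre2[of "2*l"] a 3 by cases auto
      qed
      then have "l < key n (flip (2*l) x) \<and> pot n (flip (2*l) x) \<le> 3*n*(n div 2 - l - 1) + n"
        using pot_block11[OF lenf ev l] by blast
      then have "\<phi> (2*l) \<le> 3*n*(n div 2 - l - 1) + n" unfolding \<phi>_def kx by auto
      moreover have "3*n*(n div 2 - l - 1) + 3*n = 3*n*(n div 2 - l)"
      proof -
        have "n div 2 - l - 1 + 1 = n div 2 - l" using l by simp
        then show ?thesis by (metis distrib_left mult_1_right)
      qed
      ultimately show ?thesis using potx 3 by simp
    qed
  qed
  have S: "{..<n} = insert (2*l) (insert (2*l+1) ({..<n} - {2*l, 2*l+1}))" using lt by auto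
  have "(\<Sum>p<n. \<phi> p) = \<phi> (2*l) + \<phi> (2*l+1) + (\<Sum>p\<in>{..<n} - {2*l, 2*l+1}. \<phi> p)"
    by (subst S) simp
  also have "(\<Sum>p\<in>{..<n} - {2*l, 2*l+1}. \<phi> p) = (n - 2) * pot n x"
    using rest lt by (simp add: card_Diff_subset numeral_2_eq_2)
  finally have "(\<Sum>p<n. \<phi> p) + n \<le> 2 * pot n x + (n-2) * pot n x" using spec by linarith
  also have "\<dots> = (2 + (n-2)) * pot n x" by (simp add: add_mult_distrib)
  also have "2 + (n-2) = n" using lt by simp
  finally show ?thesis unfolding \<phi>_def .
qed


definition rls_op :: "nat \<Rightarrow> bool list \<Rightarrow> bool list pmf" where
  "rls_op n x = map_pmf (\<lambda>p. flip p x) (pmf_of_set {..<n})"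

lemma pmf_rls:
  assumes "n > 0"
  shows "pmf (rls_op n x) y = card {p\<in>{..<n}. flip p x = y} / n"
proof -
  have "{..<n} \<inter> (\<lambda>p. flip p x) -` {y} = {p\<in>{..<n}. flip p x = y}" by auto
  then show ?thesis using assms unfolding rls_op_def pmf_map
    by (subst measure_pmf_of_set) auto
qed

lemma set_rls: "n > 0 \<Longrightarrow> set_pmf (rls_op n x) = (\<lambda>p. flip p x) ` {..<n}"
proof -
  assume "n > 0"
  then have "set_pmf (pmf_of_set {..<n}) = {..<n}" by (intro set_pmf_of_set) auto
  then show ?thesis unfolding rls_op_def by simp
qed

lemma nth_xor: "i < length a \<Longrightarrow> i < length z \<Longrightarrow> xor_bits a z ! i = (a!i \<noteq> z!i)"
  by (simp add: xor_bits_def)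

lemma length_xor[simp]: "length (xor_bits a z) = min (length a) (length z)"
  by (simp add: xor_bits_def)

lemma xor_flip:
  assumes "length x = n" "length z = n"
  shows "flip p (xor_bits x z) = xor_bits (flip p x) z"
proof -
  have "flip p (xor_bits x z) ! i = xor_bits (flip p x) z ! i" if i: "i < n" for i
    using i assms by (simp add: nth_flip nth_xor)
  then show ?thesis using assms by (simp add: list_eq_iff_nth_eq)
qed

lemma xor_inj:
  assumes "length a = n" "length b = n" "length z = n" "xor_bits a z = xor_bits b z"
  shows "a = b"
proof -
  have "a!i = b!i" if i: "i < n" for i
  proof -
    have "xor_bits a z ! i = xor_bits b z ! i" using assms(4) by simp
    then have "(a!i \<noteq> z!i) = (b!i \<noteq> z!i)" using i assms(1-3) by (simp add: nth_xor)
    then show ?thesis by (cases "z!i") auto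
  qed
  then show ?thesis using assms(1,2) by (auto simp: list_eq_iff_nth_eq)
qed

lemma perm_flip:
  assumes s: "\<sigma> permutes {..<n}" and len: "length x = n" and p: "p < n"
  shows "perm_bits n \<sigma> (flip (\<sigma> p) x) = flip p (perm_bits n \<sigma> x)"
proof -
  have inj: "\<sigma> i = \<sigma> p \<longleftrightarrow> i = p" for i using permutes_inj[OF s] by (auto dest: injD)
  have lt: "i < n \<Longrightarrow> \<sigma> i < n" for i using permutes_in_image[OF s] by auto
  show ?thesis using len p lt inj
    by (auto simp: perm_bits_def list_eq_iff_nth_eq nth_flip)
qed

lemma perm_inj:
  assumes s: "\<sigma> permutes {..<n}" and "length a = n" "length b = n"
    and eq: "perm_bits n \<sigma> a = perm_bits n \<sigma> b"
  shows "a = b"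
proof -
  have "a ! j = b ! j" if j: "j < n" for j
  proof -
    have i: "inv \<sigma> j < n" using permutes_in_image[OF permutes_inv[OF s]] j by auto
    have "perm_bits n \<sigma> a ! inv \<sigma> j = perm_bits n \<sigma> b ! inv \<sigma> j" using eq by simp
    then show ?thesis using i by (simp add: perm_bits_def permutes_inverses(1)[OF s])
  qed
  then show ?thesis using assms by (auto simp: list_eq_iff_nth_eq)
qed

lemma length_perm[simp]: "length (perm_bits n \<sigma> x) = n" by (simp add: perm_bits_def)

lemma rls_unbiased:
  assumes n: "n > 0"
  shows "unary_unbiased n (rls_op n)"
  unfolding unary_unbiased_def
proof (intro conjI ballI allI impI)
  fix x assume "x \<in> bitstrings n"
  then show "set_pmf (rls_op n x) \<subseteq> bitstrings n"
    using n by (auto simp: set_rls bitstrings_def)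
next
  fix x y z assume xyz: "x \<in> bitstrings n" "y \<in> bitstrings n" "z \<in> bitstrings n"
  have "{p\<in>{..<n}. flip p x = y} = {p\<in>{..<n}. flip p (xor_bits x z) = xor_bits y z}"
    using xyz xor_inj[of "flip _ x" n y z] by (auto simp: bitstrings_def xor_flip)
  then show "pmf (rls_op n x) y = pmf (rls_op n (xor_bits x z)) (xor_bits y z)"
    using n by (simp add: pmf_rls)
next
  fix \<sigma> x y assume s: "\<sigma> permutes {0..<n}" and xy: "x \<in> bitstrings n" "y \<in> bitstrings n"
  have s': "\<sigma> permutes {..<n}" using s by (simp add: lessThan_atLeast0)
  have e1: "{p\<in>{..<n}. flip p (perm_bits n \<sigma> x) = perm_bits n \<sigma> y} = {p\<in>{..<n}. flip (\<sigma> p) x = y}"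
  proof -
    have "flip p (perm_bits n \<sigma> x) = perm_bits n \<sigma> y \<longleftrightarrow> flip (\<sigma> p) x = y" if p: "p < n" for p
    proof -
      have "flip p (perm_bits n \<sigma> x) = perm_bits n \<sigma> (flip (\<sigma> p) x)"
        using perm_flip[OF s' _ p, of x] xy by (simp add: bitstrings_def)
      then show ?thesis using perm_inj[OF s', of "flip (\<sigma> p) x" y] xy by (auto simp: bitstrings_def)
    qed
    then show ?thesis by auto
  qed
  have e2: "\<sigma> ` {p\<in>{..<n}. flip (\<sigma> p) x = y} = {q\<in>{..<n}. flip q x = y}"
  proof
    show "\<sigma> ` {p\<in>{..<n}. flip (\<sigma> p) x = y} \<subseteq> {q\<in>{..<n}. flip q x = y}"
      using permutes_in_image[OF s'] by auto
  next
    show "{q\<in>{..<n}. flip q x = y} \<subseteq> \<sigma> ` {p\<in>{..<n}. flip (\<sigma> p) x = y}"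
    proof
      fix q assume q: "q \<in> {q\<in>{..<n}. flip q x = y}"
      have "inv \<sigma> q \<in> {..<n}" using permutes_in_image[OF permutes_inv[OF s']] q by auto
      then show "q \<in> \<sigma> ` {p\<in>{..<n}. flip (\<sigma> p) x = y}"
        using q permutes_inverses(1)[OF s'] by (auto intro!: image_eqI[where x="inv \<sigma> q"])
    qed
  qed
  have "card {p\<in>{..<n}. flip (\<sigma> p) x = y} = card {q\<in>{..<n}. flip q x = y}"
    using card_image[OF inj_on_subset[OF permutes_inj_on[OF s']]] e2 by (metis subset_UNIV)
  then show "pmf (rls_op n x) y = pmf (rls_op n (perm_bits n \<sigma> x)) (perm_bits n \<sigma> y)"
    using n e1 by (simp add: pmf_rls)
qed


primrec idxr :: "nat list \<Rightarrow> nat" where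
  "idxr [] = 0"
| "idxr (v # r) = (if r = [] then 0 else if rev r ! idxr r div 2 \<le> v div 2 then length r else idxr r)"

definition idx :: "nat list \<Rightarrow> nat" where "idx h = idxr (rev h)"

lemma idxr_lt: "r \<noteq> [] \<Longrightarrow> idxr r < length r"
  by (induction r) auto

lemma idx_lt: "h \<noteq> [] \<Longrightarrow> idx h < length h"
  unfolding idx_def using idxr_lt[of "rev h"] by simp

lemma idx_snoc: "h \<noteq> [] \<Longrightarrow> idx (h @ [v]) = (if h ! idx h div 2 \<le> v div 2 then length h else idx h)"
  by (simp add: idx_def)

definition alg :: "nat \<Rightarrow> algorithm" where
  "alg n h = return_pmf (rls_op n, idx h)"

lemma valid_alg: "n > 0 \<Longrightarrow> valid_algorithm n (alg n)"
  unfolding valid_algorithm_def alg_def using rls_unbiased idx_lt by auto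

definition cur :: "nat \<Rightarrow> bool list list \<Rightarrow> bool list" where
  "cur n xs = xs ! idx (map (dlb n) xs)"

lemma cur_in: "xs \<noteq> [] \<Longrightarrow> cur n xs \<in> set xs"
  unfolding cur_def using idx_lt[of "map (dlb n) xs"] by simp

lemma cur_snoc: "xs \<noteq> [] \<Longrightarrow> cur n (xs @ [y]) = (if key n (cur n xs) \<le> key n y then y else cur n xs)"
proof -
  assume ne: "xs \<noteq> []"
  have lt: "idx (map (dlb n) xs) < length xs" using idx_lt[of "map (dlb n) xs"] ne by simp
  show ?thesis unfolding cur_def key_def using ne lt
    by (simp add: idx_snoc nth_append)
qed

lemma run_Suc: "run n (dlb n) (alg n) (Suc k) =
   bind_pmf (run n (dlb n) (alg n) k) (\<lambda>xs. map_pmf (\<lambda>y. xs @ [y]) (rls_op n (cur n xs)))"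
  by (simp add: alg_def cur_def bind_return_pmf)

lemma bitstrings_finite: "finite (bitstrings n)"
proof -
  have "bitstrings n = {xs. set xs \<subseteq> UNIV \<and> length xs = n}" by (auto simp: bitstrings_def)
  then show ?thesis using finite_lists_length_eq[of "UNIV::bool set" n] by simp
qed

lemma bitstrings_ne: "bitstrings n \<noteq> {}"
  by (auto simp: bitstrings_def intro!: exI[of _ "replicate n True"])

lemma run_inv:
  assumes n: "n > 0"
  shows "xs \<in> set_pmf (run n (dlb n) (alg n) k) \<Longrightarrow> length xs = Suc k \<and> set xs \<subseteq> bitstrings n"
proof (induction k arbitrary: xs)
  case 0
  then show ?case using set_pmf_of_set[OF bitstrings_ne bitstrings_finite] by auto
next
  case (Suc k)
  from Suc.prems obtain ys y where ys: "ys \<in> set_pmf (run n (dlb n) (alg n) k)"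
    and y: "y \<in> set_pmf (rls_op n (cur n ys))" and xs: "xs = ys @ [y]"
    unfolding run_Suc by auto
  have ih: "length ys = Suc k" "set ys \<subseteq> bitstrings n" using Suc.IH[OF ys] by auto
  have "ys \<noteq> []" using ih(1) by auto
  then have "cur n ys \<in> bitstrings n" using cur_in[of ys n] ih(2) by blast
  then have "y \<in> bitstrings n" using y n by (auto simp: set_rls bitstrings_def)
  then show ?case using ih xs by auto
qed

lemma is_opt_iff:
  assumes "even n" "x \<in> bitstrings n"
  shows "is_optimum n (dlb n) x \<longleftrightarrow> x = replicate n True"
proof
  assume "is_optimum n (dlb n) x"
  then have "dlb n (replicate n True) \<le> dlb n x" unfolding is_optimum_def by (auto simp: bitstrings_def)
  then show "x = replicate n True" using dlb_le(2)[of x n] assms dlb_ones[of n]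
    by (force simp: bitstrings_def)
next
  assume "x = replicate n True"
  then show "is_optimum n (dlb n) x" unfolding is_optimum_def
    using dlb_le(1) assms dlb_ones[of n] by (auto simp: bitstrings_def)
qed

definition Phi :: "nat \<Rightarrow> bool list list \<Rightarrow> ennreal" where
  "Phi n xs = (if replicate n True \<in> set xs then 0 else of_nat (pot n (cur n xs)))"

definition NO :: "nat \<Rightarrow> bool list list set" where
  "NO n = {xs. \<forall>x\<in>set xs. \<not> is_optimum n (dlb n) x}"

lemma ennreal_arith:
  fixes S P n :: nat
  assumes "S + n \<le> n * P" "n > 0"
  shows "of_nat S / of_nat n + 1 \<le> (of_nat P :: ennreal)"
proof -
  have r: "real S / real n + 1 \<le> real P"
  proof -
    have "real S + real n \<le> real n * real P" using assms(1) by (metis of_nat_add of_nat_le_iff of_nat_mult)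
    then show ?thesis using assms(2) by (simp add: field_simps)
  qed
  have "of_nat S / of_nat n + 1 = ennreal (real S / real n + 1)"
    using assms(2) by (simp add: ennreal_of_nat_eq_real_of_nat divide_ennreal ennreal_plus)
  also have "\<dots> \<le> ennreal (real P)" using r by (rule ennreal_leI)
  finally show ?thesis by (simp add: ennreal_of_nat_eq_real_of_nat)
qed

lemma step_pointwise:
  assumes ev: "even n" and n: "n > 0" and ne: "xs \<noteq> []" and bs: "set xs \<subseteq> bitstrings n"
  shows "(\<integral>\<^sup>+ y. Phi n (xs @ [y]) \<partial>rls_op n (cur n xs)) + indicator (NO n) xs \<le> Phi n xs"
proof (cases "replicate n True \<in> set xs")
  case True
  have "replicate n True \<in> bitstrings n" by (simp add: bitstrings_def)
  then have "xs \<notin> NO n" using True is_opt_iff[OF ev] by (auto simp: NO_def)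
  then show ?thesis using True by (simp add: Phi_def)
next
  case False
  define x where "x = cur n xs"
  have xin: "x \<in> set xs" using cur_in[OF ne] x_def by simp
  have xlen: "length x = n" using xin bs by (auto simp: bitstrings_def)
  have xne: "x \<noteq> replicate n True" using xin False by auto
  have "xs \<in> NO n" using False bs is_opt_iff[OF ev] by (force simp: NO_def)
  then have ind: "indicator (NO n) xs = (1::ennreal)" by simp
  define \<phi> where "\<phi> p = (if key n x \<le> key n (flip p x) then pot n (flip p x) else pot n x)" for p
  have "(\<integral>\<^sup>+ y. Phi n (xs @ [y]) \<partial>rls_op n (cur n xs))
        \<le> (\<integral>\<^sup>+ y. of_nat (pot n (cur n (xs @ [y]))) \<partial>rls_op n x)"
    unfolding x_def by (intro nn_integral_mono) (simp add: Phi_def)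
  also have "\<dots> = (\<integral>\<^sup>+ p. of_nat (\<phi> p) \<partial>pmf_of_set {..<n})"
  proof -
    have "pot n (cur n (xs @ [flip p x])) = \<phi> p" for p
      using cur_snoc[OF ne, of n "flip p x"] unfolding \<phi>_def x_def by simp
    then show ?thesis unfolding rls_op_def by simp
  qed
  also have "\<dots> = (\<Sum>p<n. of_nat (\<phi> p)) / of_nat n"
    using n by (subst nn_integral_pmf_of_set) auto
  also have "\<dots> = of_nat (\<Sum>p<n. \<phi> p) / of_nat n" by simp
  finally have I: "(\<integral>\<^sup>+ y. Phi n (xs @ [y]) \<partial>rls_op n (cur n xs)) \<le> of_nat (\<Sum>p<n. \<phi> p) / of_nat n" .
  have "(\<Sum>p<n. \<phi> p) + n \<le> n * pot n x"
    using drift_local[OF xlen ev xne] unfolding \<phi>_def .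
  then have "of_nat (\<Sum>p<n. \<phi> p) / of_nat n + 1 \<le> (of_nat (pot n x) :: ennreal)"
    using n by (rule ennreal_arith)
  moreover have "(\<integral>\<^sup>+ y. Phi n (xs @ [y]) \<partial>rls_op n (cur n xs)) + indicator (NO n) xs
      \<le> of_nat (\<Sum>p<n. \<phi> p) / of_nat n + 1" using I unfolding ind by (rule add_right_mono)
  ultimately have "(\<integral>\<^sup>+ y. Phi n (xs @ [y]) \<partial>rls_op n (cur n xs)) + indicator (NO n) xs
      \<le> of_nat (pot n x)" by (rule order_trans[rotated])
  then show ?thesis using False unfolding Phi_def x_def by simp
qed


abbreviation R :: "nat \<Rightarrow> nat \<Rightarrow> bool list list pmf" where
  "R n k \<equiv> run n (dlb n) (alg n) k"

lemma step_expect: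
  assumes ev: "even n" and n: "n > 0"
  shows "(\<integral>\<^sup>+ xs. Phi n xs \<partial>R n (Suc k)) + ennreal (measure_pmf.prob (R n k) (NO n))
         \<le> (\<integral>\<^sup>+ xs. Phi n xs \<partial>R n k)"
proof -
  have e1: "(\<integral>\<^sup>+ xs. Phi n xs \<partial>R n (Suc k))
     = (\<integral>\<^sup>+ xs. (\<integral>\<^sup>+ y. Phi n (xs @ [y]) \<partial>rls_op n (cur n xs)) \<partial>R n k)"
    unfolding run_Suc by simp
  have e2: "ennreal (measure_pmf.prob (R n k) (NO n)) = (\<integral>\<^sup>+ xs. indicator (NO n) xs \<partial>R n k)"
    by (simp add: measure_pmf.emeasure_eq_measure[symmetric])
  have "(\<integral>\<^sup>+ xs. Phi n xs \<partial>R n (Suc k)) + ennreal (measure_pmf.prob (R n k) (NO n))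
     = (\<integral>\<^sup>+ xs. (\<integral>\<^sup>+ y. Phi n (xs @ [y]) \<partial>rls_op n (cur n xs)) + indicator (NO n) xs \<partial>R n k)"
    unfolding e1 e2 by (rule nn_integral_add[symmetric]) auto
  also have "\<dots> \<le> (\<integral>\<^sup>+ xs. Phi n xs \<partial>R n k)"
  proof (rule nn_integral_mono_AE, rule AE_pmfI)
    fix xs assume "xs \<in> set_pmf (R n k)"
    then have "length xs = Suc k" "set xs \<subseteq> bitstrings n" using run_inv[OF n] by auto
    then show "(\<integral>\<^sup>+ y. Phi n (xs @ [y]) \<partial>rls_op n (cur n xs)) + indicator (NO n) xs \<le> Phi n xs"
    proof -
      have "xs \<noteq> []" using \<open>length xs = Suc k\<close> by (metis list.size(3) nat.distinct(1))
      then show ?thesis using step_pointwise[OF ev n] \<open>set xs \<subseteq> bitstrings n\<close> by blast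
    qed
  qed
  finally show ?thesis .
qed

lemma partial_bound:
  assumes ev: "even n" and n: "n > 0"
  shows "(\<Sum>t<k. ennreal (measure_pmf.prob (R n t) (NO n))) + (\<integral>\<^sup>+ xs. Phi n xs \<partial>R n k)
         \<le> (\<integral>\<^sup>+ xs. Phi n xs \<partial>R n 0)"
proof (induction k)
  case 0
  then show ?case by simp
next
  case (Suc k)
  have "(\<Sum>t<Suc k. ennreal (measure_pmf.prob (R n t) (NO n))) + (\<integral>\<^sup>+ xs. Phi n xs \<partial>R n (Suc k))
      = (\<Sum>t<k. ennreal (measure_pmf.prob (R n t) (NO n)))
        + ((\<integral>\<^sup>+ xs. Phi n xs \<partial>R n (Suc k)) + ennreal (measure_pmf.prob (R n k) (NO n)))"
    by (simp add: algebra_simps)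
  also have "\<dots> \<le> (\<Sum>t<k. ennreal (measure_pmf.prob (R n t) (NO n))) + (\<integral>\<^sup>+ xs. Phi n xs \<partial>R n k)"
    by (rule add_left_mono[OF step_expect[OF ev n]])
  also have "\<dots> \<le> (\<integral>\<^sup>+ xs. Phi n xs \<partial>R n 0)" by (rule Suc.IH)
  finally show ?case .
qed

lemma Phi_le: "Phi n xs \<le> of_nat (3*n*(n div 2) + n)"
  unfolding Phi_def using pot_le by (auto simp del: of_nat_add)

lemma runtime_bound:
  assumes ev: "even n" and n: "n > 0"
  shows "expected_runtime n (dlb n) (alg n) \<le> of_nat (3*n*(n div 2) + n)"
proof -
  have E0: "(\<integral>\<^sup>+ xs. Phi n xs \<partial>R n 0) \<le> of_nat (3*n*(n div 2) + n)"
  proof -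
    have "(\<integral>\<^sup>+ xs. Phi n xs \<partial>R n 0) \<le> (\<integral>\<^sup>+ xs. of_nat (3*n*(n div 2) + n) \<partial>R n 0)"
      by (intro nn_integral_mono Phi_le)
    also have "\<dots> = of_nat (3*n*(n div 2) + n)"
      by (simp add: measure_pmf.emeasure_space_1 del: of_nat_add)
    finally show ?thesis .
  qed
  have NOeq: "{xs. \<forall>x\<in>set xs. \<not> is_optimum n (dlb n) x} = NO n" by (simp add: NO_def)
  have "(\<Sum>t<k. ennreal (measure_pmf.prob (R n t) (NO n))) \<le> of_nat (3*n*(n div 2) + n)" for k
    using partial_bound[OF ev n, of k] E0 by (meson add_increasing2 order_trans zero_le le_iff_add order_refl)
  then have "(\<Sum>t. ennreal (measure_pmf.prob (R n t) (NO n))) \<le> of_nat (3*n*(n div 2) + n)"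
    by (intro suminf_le_const) (auto intro: summableI)
  then show ?thesis unfolding expected_runtime_def NOeq .
qed

theorem lemma10:
  shows "\<exists>C::real. C > 0 \<and> (\<exists>N. \<forall>n\<ge>N. even n \<longrightarrow>
           unary_unbiased_bbc n (dlb n) \<le> ennreal (C * (real n)^2))"
proof (intro exI conjI allI impI)
  show "(2::real) > 0" by simp
  fix n :: nat assume n2: "n \<ge> 2" and ev: "even n"
  then have n: "n > 0" by simp
  have "unary_unbiased_bbc n (dlb n) \<le> expected_runtime n (dlb n) (alg n)"
    unfolding unary_unbiased_bbc_def using valid_alg[OF n] by (auto intro: INF_lower)
  also have "\<dots> \<le> of_nat (3*n*(n div 2) + n)" by (rule runtime_bound[OF ev n])
  also have "\<dots> \<le> ennreal (2 * (real n)^2)"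
  proof -
    obtain m where m: "n = 2*m" using ev by blast
    have "m \<ge> 1" using n2 m by simp
    have "3*n*(n div 2) + n \<le> 2 * n^2" using m \<open>m \<ge> 1\<close> by (simp add: power2_eq_square algebra_simps)
    then have "real (3*n*(n div 2) + n) \<le> 2 * (real n)^2" by (metis of_nat_le_iff of_nat_mult of_nat_numeral of_nat_power)
    then show ?thesis by (simp add: ennreal_of_nat_eq_real_of_nat ennreal_leI del: of_nat_add)
  qed
  finally show "unary_unbiased_bbc n (dlb n) \<le> ennreal (2 * (real n)^2)" .
qed

end
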